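(* Let $F$ be a finite field with $q=|F|$ and let $u,v\in\mathbb{N}$. For each $y=(y_1,\ldots,y_{u+v-1})\in F^{u+v-1}$ define the $v\times v$ matrix $J_{u,v}(y)=(y_{u-i+j})_{1\le i\le v,\,1\le j\le v}$, where $y_0:=1$ and $y_k:=0$ for all $k<0$. Then the number of $y\in F^{u+v-1}$ satisfying $\det(J_{u,v}(y))=0$ is $q^{u+v-2}$.
   Context: $\mathbb{N}=\{0,1,2,\ldots\}$. *)

theory Defs
  imports "Jordan_Normal_Form.Determinant"
begin

text \<open>The vector y = (y_1,...,y_{u+v-1}) is represented as a list ys of length u+v-1,
  with y_k = ys ! (k-1) for 1 <= k <= u+v-1, y_0 = 1 and y_k = 0 for k < 0.\<close>

definition yent :: "'a::comm_ring_1 list \<Rightarrow> int \<Rightarrow> 'a" where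
  "yent ys k = (if k = 0 then 1 else if k < 0 then 0 else ys ! (nat k - 1))"

text \<open>J_{u,v}(y) = (y_{u-i+j}) with 1-based i,j; with 0-based indices the difference
  j - i is the same.\<close>

definition Jmat :: "nat \<Rightarrow> nat \<Rightarrow> 'a::comm_ring_1 list \<Rightarrow> 'a mat" where
  "Jmat u v ys = mat v v (\<lambda>(i, j). yent ys (int u - int i + int j))"

end

theory Submission
  imports Defs "HOL-Computational_Algebra.Formal_Power_Series"
begin
no_notation vec_index (infixl \<open>$\<close> 100)
notation fps_nth (infixl \<open>$\<close> 75)

definition fps_of :: "'a::field list \<Rightarrow> 'a fps" where
  "fps_of xs = Abs_fps (\<lambda>k. if k < length xs then xs!k else 0)"

definition Sing :: "nat \<Rightarrow> nat \<Rightarrow> 'a::field fps \<Rightarrow> bool" where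
  "Sing a b f = (\<exists>Q. Q \<noteq> 0 \<and> (\<forall>k\<ge>b. Q$k = 0) \<and> (\<forall>k. a \<le> k \<and> k < a+b \<longrightarrow> (f*Q)$k = 0))"

lemma fps_of_Cons: "fps_of (x#xs) = fps_const x + fps_X * fps_of xs"
  by (rule fps_ext) (auto simp: fps_of_def nth_Cons split: nat.splits)

lemma mult_trunc_cong:
  fixes A B C :: "'a::field fps"
  assumes "\<forall>k<n. A$k = B$k" "k < n"
  shows "(A*C)$k = (B*C)$k"
  unfolding fps_mult_nth using assms by (intro sum.cong) auto

lemma mult_trunc_cong2:
  fixes A B C :: "'a::field fps"
  assumes "\<forall>k<n. A$k = B$k" "k < n"
  shows "(C*A)$k = (C*B)$k"
  using mult_trunc_cong[OF assms, of C] by (simp add: mult.commute)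

lemma Sing_cong:
  assumes "\<forall>k<a+b. f$k = g$k"
  shows "Sing a b f = Sing a b g"
  unfolding Sing_def using mult_trunc_cong[OF assms] by metis

lemma Sing_0: "\<not> Sing a 0 f"
  unfolding Sing_def by (auto simp: fps_eq_iff)

lemma Sing_shift:
  assumes "1 \<le> a" "b \<le> a \<or> c = 0"
  shows "Sing a b (fps_const c + fps_X * g) = Sing (a-1) b g"
proof -
  have e: "((fps_const c + fps_X * g) * Q) $ Suc m = c * Q $ Suc m + (g*Q) $ m" for Q m
    by (simp add: distrib_right mult.assoc)
  show ?thesis unfolding Sing_def
  proof (intro iffI; elim exE conjE)
    fix Q assume Q: "Q \<noteq> 0" "\<forall>k\<ge>b. Q $ k = 0"
      "\<forall>k. a \<le> k \<and> k < a + b \<longrightarrow> ((fps_const c + fps_X * g) * Q) $ k = 0"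
    have "(g*Q) $ k = 0" if k: "a - 1 \<le> k \<and> k < a - 1 + b" for k
    proof -
      have "((fps_const c + fps_X * g) * Q) $ Suc k = 0" proof -
        have "a \<le> Suc k \<and> Suc k < a + b" using k assms(1) by linarith
        thus ?thesis using Q(3) by blast
      qed
      moreover have "c * Q $ Suc k = 0" using Q(2) k assms by auto
      ultimately show "(g*Q) $ k = 0" using e by simp
    qed
    thus "\<exists>Q. Q \<noteq> 0 \<and> (\<forall>k\<ge>b. Q $ k = 0) \<and> (\<forall>k. a - 1 \<le> k \<and> k < a - 1 + b \<longrightarrow> (g * Q) $ k = 0)"
      using Q by blast
  next
    fix Q assume Q: "Q \<noteq> 0" "\<forall>k\<ge>b. Q $ k = 0"
      "\<forall>k. a - 1 \<le> k \<and> k < a - 1 + b \<longrightarrow> (g * Q) $ k = 0"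
    have "((fps_const c + fps_X * g) * Q) $ k = 0" if k: "a \<le> k \<and> k < a + b" for k
    proof -
      obtain m where m: "k = Suc m" using k assms(1) by (cases k) auto
      have "a - 1 \<le> m \<and> m < a - 1 + b" using k m by linarith
      hence "(g*Q) $ m = 0" using Q(3) by blast
      moreover have "c * Q $ Suc m = 0" using Q(2) k m assms by auto
      ultimately show ?thesis using e m by simp
    qed
    thus "\<exists>Q. Q \<noteq> 0 \<and> (\<forall>k\<ge>b. Q $ k = 0) \<and> (\<forall>k. a \<le> k \<and> k < a + b \<longrightarrow> ((fps_const c + fps_X * g) * Q) $ k = 0)"
      using Q by blast
  qed
qed

lemma Sing_dual1:
  assumes "f$0 \<noteq> 0" "Sing a b f"
  shows "Sing b a (inverse f)"
proof -
  obtain Q where Q: "Q \<noteq> 0" "\<forall>k\<ge>b. Q$k = 0" "\<forall>k. a \<le> k \<and> k < a+b \<longrightarrow> (f*Q)$k = 0"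
    using assms(2) unfolding Sing_def by blast
  define P where "P = Abs_fps (\<lambda>k. if k < a then (f*Q)$k else 0)"
  have agree: "\<forall>k<a+b. P$k = (f*Q)$k" using Q(3) by (auto simp: P_def)
  have inv: "inverse f * (f*Q) = Q"
    using assms(1) by (simp add: mult.assoc[symmetric] inverse_mult_eq_1)
  have agree2: "(inverse f * P)$k = Q$k" if "k < a+b" for k
    using mult_trunc_cong2[OF agree that, of "inverse f"] inv by simp
  have "P \<noteq> 0"
  proof
    assume "P = 0"
    hence "Q$k = 0" for k
      using agree2[of k] Q(2) by (cases "k < a+b") auto
    thus False using Q(1) by (simp add: fps_eq_iff)
  qed
  moreover have "\<forall>k\<ge>a. P$k = 0" by (simp add: P_def)
  moreover have "\<forall>k. b \<le> k \<and> k < b+a \<longrightarrow> (inverse f * P)$k = 0"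
    using agree2 Q(2) by auto
  ultimately show ?thesis unfolding Sing_def by blast
qed

lemma Sing_dual:
  assumes "f$0 \<noteq> 0"
  shows "Sing b a (inverse f) = Sing a b f"
  using Sing_dual1[OF assms, of a b] Sing_dual1[of "inverse f" b a] assms by auto

lemma Sing_scale:
  assumes "c \<noteq> 0"
  shows "Sing a b (fps_const c * f) = Sing a b f"
  unfolding Sing_def using assms by (simp add: mult.assoc)

lemma Sing_zero_left:
  assumes "1 \<le> b"
  shows "Sing 0 b f \<longleftrightarrow> f$0 = 0"
proof
  assume "Sing 0 b f"
  show "f$0 = 0"
  proof (rule ccontr)
    assume "f$0 \<noteq> 0"
    hence "Sing b 0 (inverse f)" using Sing_dual \<open>Sing 0 b f\<close> by blast
    thus False using Sing_0 by blast
  qed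
next
  assume f0: "f$0 = 0"
  have "(f * fps_X^(b-1)) $ k = 0" if "k < b" for k
    using that f0 by (simp add: mult.commute[of f] fps_X_power_mult_nth)
  moreover have "(fps_X^(b-1) :: 'a fps) \<noteq> 0" by simp
  moreover have "\<forall>k\<ge>b. (fps_X^(b-1) :: 'a fps) $ k = 0" using assms by (auto simp: fps_X_power_iff)
  ultimately show "Sing 0 b f" unfolding Sing_def by (intro exI[of _ "fps_X^(b-1)"]) auto
qed

definition C :: "'a::{field,finite} \<Rightarrow> nat \<Rightarrow> nat \<Rightarrow> nat" where
  "C x a b = card {ys::'a list. length ys = a+b-1 \<and> Sing a b (fps_of (x#ys))}"

definition G :: "nat \<Rightarrow> nat \<Rightarrow> 'a::{field,finite} itself \<Rightarrow> nat" where
  "G a b T = card {ys::'a list. length ys = a+b \<and> Sing a b (fps_of ys)}"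

lemma card_lists_univ: "card {ys::'a::finite list. length ys = n} = card (UNIV::'a set) ^ n"
  using card_lists_length_eq[of "UNIV::'a set" n] by simp

lemma C_shift:
  assumes "1 \<le> a" "b \<le> a \<or> x = 0"
  shows "C (x::'a::{field,finite}) a b = G (a-1) b TYPE('a)"
proof -
  have "{ys::'a list. length ys = a+b-1 \<and> Sing a b (fps_of (x#ys))}
      = {ys. length ys = (a-1)+b \<and> Sing (a-1) b (fps_of ys)}"
  proof -
    have "Sing a b (fps_of (x#ys)) = Sing (a-1) b (fps_of ys)" for ys
      unfolding fps_of_Cons by (rule Sing_shift[OF assms])
    moreover have "a+b-1 = (a-1)+b" using assms(1) by simp
    ultimately show ?thesis by simp
  qed
  thus ?thesis by (simp add: C_def G_def)
qed

lemma fps_of_scale: "fps_of (x # map ((*) x) ys) = fps_const x * fps_of (1#ys)"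
  by (rule fps_ext) (auto simp: fps_of_def nth_Cons split: nat.splits)

lemma C_scale:
  assumes "x \<noteq> 0"
  shows "C (x::'a::{field,finite}) a b = C (1::'a) a b"
proof -
  let ?A = "\<lambda>x. {ys::'a list. length ys = a+b-1 \<and> Sing a b (fps_of (x#ys))}"
  have "map ((*) x) ` ?A 1 = ?A x"
  proof (intro equalityI subsetI)
    fix zs assume "zs \<in> map ((*) x) ` ?A 1"
    then obtain ys where "ys \<in> ?A 1" "zs = map ((*) x) ys" by blast
    thus "zs \<in> ?A x" using Sing_scale[OF assms] by (simp add: fps_of_scale)
  next
    fix zs assume z: "zs \<in> ?A x"
    let ?ys = "map (\<lambda>t. t / x) zs"
    have e: "zs = map ((*) x) ?ys" using assms by (simp add: map_idI comp_def)
    have "Sing a b (fps_of (x#zs))" using z by simp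
    hence "Sing a b (fps_of (x # map ((*) x) ?ys))" using e by simp
    hence "Sing a b (fps_of (1 # ?ys))" using Sing_scale[OF assms] fps_of_scale[of x ?ys] by simp
    hence "?ys \<in> ?A 1" using z by simp
    thus "zs \<in> map ((*) x) ` ?A 1" using e by blast
  qed
  moreover have inj: "inj_on (map ((*) x)) (?A 1)"
  proof -
    have "inj ((*) x)" using assms by (auto simp: inj_def)
    hence "inj (map ((*) x))" by (rule inj_mapI)
    thus ?thesis by (rule inj_on_subset) simp
  qed
  ultimately have "card (?A x) = card (?A 1)" using card_image[OF inj] by simp
  moreover have "C x a b = card (?A x)" "C (1::'a) a b = card (?A 1)" unfolding C_def by simp_all
  ultimately show ?thesis by simp
qed


lemma finite_len: "finite {ys::'a::finite list. length ys = n \<and> P ys}"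
proof -
  have "finite {ys::'a list. set ys \<subseteq> UNIV \<and> length ys = n}"
    by (rule finite_lists_length_eq) simp
  thus ?thesis by (rule finite_subset[rotated]) auto
qed

lemma inv_cong:
  fixes f g :: "'a::field fps"
  assumes f0: "f$0 \<noteq> 0" and agree: "\<forall>k<n. f$k = g$k" and k: "k < n"
  shows "inverse f $ k = inverse g $ k"
proof -
  have g0: "g$0 \<noteq> 0" using f0 agree k by auto
  have e: "inverse f - inverse g = inverse f * (g - f) * inverse g"
  proof -
    have "inverse f * (g - f) * inverse g = inverse f * (g * inverse g) - (inverse f * f) * inverse g"
      by (simp add: algebra_simps)
    also have "\<dots> = inverse f - inverse g"
      using f0 g0 by (simp add: inverse_mult_eq_1 inverse_mult_eq_1')
    finally show ?thesis by simp
  qed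
  have z: "\<forall>j<n. (g - f) $ j = (0::'a fps) $ j" using agree by simp
  have "\<forall>j<n. (inverse f * (g - f)) $ j = (0::'a fps) $ j"
    using mult_trunc_cong2[OF z, of _ "inverse f"] by simp
  hence "(inverse f * (g - f) * inverse g) $ k = (0 * inverse g) $ k"
    by (rule mult_trunc_cong[OF _ k])
  hence "(inverse f - inverse g) $ k = 0" using e by simp
  thus ?thesis by simp
qed

definition phi :: "'a::field list \<Rightarrow> 'a list" where
  "phi ys = map (\<lambda>k. inverse (fps_of (1#ys)) $ Suc k) [0..<length ys]"

lemma phi_agree:
  "\<forall>k<Suc (length ys). fps_of (1 # phi ys) $ k = inverse (fps_of (1#ys)) $ k"
proof (intro allI impI)
  fix k assume k: "k < Suc (length ys)"
  show "fps_of (1 # phi ys) $ k = inverse (fps_of (1#ys)) $ k"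
  proof (cases k)
    case 0 thus ?thesis by (simp add: fps_of_def)
  next
    case (Suc j) thus ?thesis using k by (simp add: fps_of_def phi_def)
  qed
qed

lemma phi_len[simp]: "length (phi ys) = length ys" by (simp add: phi_def)

lemma phi_phi: "phi (phi (ys::'a::field list)) = ys"
proof (rule nth_equalityI)
  show "length (phi (phi ys)) = length ys" by simp
  fix j assume j: "j < length (phi (phi ys))"
  let ?f = "fps_of (1#ys)"
  have f0: "?f $ 0 \<noteq> 0" by (simp add: fps_of_def)
  have a1: "\<forall>k<Suc (length ys). fps_of (1 # phi ys) $ k = inverse ?f $ k" by (rule phi_agree)
  have "fps_of (1 # phi (phi ys)) $ Suc j = inverse (fps_of (1 # phi ys)) $ Suc j"
    using phi_agree[of "phi ys"] j by simp
  also have "\<dots> = inverse (inverse ?f) $ Suc j"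
    using inv_cong[OF _ a1, of "Suc j"] j by (simp add: fps_of_def)
  also have "\<dots> = ?f $ Suc j" using f0 by simp
  finally show "phi (phi ys) ! j = ys ! j" using j by (simp add: fps_of_def)
qed

lemma Sing_phi:
  assumes "length ys = a + b - 1" "1 \<le> a + b" "Sing a b (fps_of (1#ys))"
  shows "Sing b a (fps_of (1 # phi ys))"
proof -
  have "Sing b a (inverse (fps_of (1#ys)))"
    using Sing_dual[of "fps_of (1#ys)" b a] assms(3) by (simp add: fps_of_def)
  moreover have "\<forall>k<b+a. fps_of (1 # phi ys) $ k = inverse (fps_of (1#ys)) $ k"
    using phi_agree[of ys] assms(1,2) by simp
  ultimately show ?thesis using Sing_cong by blast
qed

lemma C_dual_le:
  assumes "1 \<le> a + b"
  shows "C (1::'a::{field,finite}) a b \<le> C (1::'a) b a"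
proof -
  let ?A = "{ys::'a list. length ys = a+b-1 \<and> Sing a b (fps_of (1#ys))}"
  let ?B = "{ys::'a list. length ys = b+a-1 \<and> Sing b a (fps_of (1#ys))}"
  have "phi ` ?A \<subseteq> ?B" using Sing_phi assms by (auto simp: add.commute)
  moreover have "inj_on phi ?A" by (rule inj_on_inverseI[where g=phi]) (rule phi_phi)
  moreover have "finite ?B" by (rule finite_len)
  ultimately have "card ?A \<le> card ?B" by (intro card_inj_on_le)
  thus ?thesis by (simp add: C_def)
qed

lemma C_dual:
  assumes "1 \<le> a + b"
  shows "C (1::'a::{field,finite}) a b = C (1::'a) b a"
proof (rule antisym)
  show "C (1::'a) a b \<le> C (1::'a) b a" by (rule C_dual_le[OF assms])
  show "C (1::'a) b a \<le> C (1::'a) a b" by (rule C_dual_le) (use assms in simp)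
qed


lemma G_sum:
  assumes "1 \<le> a + b"
  shows "G a b TYPE('a::{field,finite}) = C (0::'a) a b + (card (UNIV::'a set) - 1) * C (1::'a) a b"
proof -
  define A where "A = (\<lambda>x::'a. {ys::'a list. length ys = a+b-1 \<and> Sing a b (fps_of (x#ys))})"
  have S: "{ys::'a list. length ys = a+b \<and> Sing a b (fps_of ys)} = (\<Union>x\<in>UNIV. (Cons x) ` A x)"
  proof (intro equalityI subsetI)
    fix ys assume ys: "ys \<in> {ys::'a list. length ys = a+b \<and> Sing a b (fps_of ys)}"
    hence l: "length ys = a+b" and s: "Sing a b (fps_of ys)" by simp_all
    obtain x zs where xz: "ys = x # zs" using l assms by (cases ys) simp_all
    have "length zs = a+b-1" using l xz by simp
    hence "zs \<in> A x" using s xz unfolding A_def by simp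
    thus "ys \<in> (\<Union>x\<in>UNIV. (Cons x) ` A x)" using xz by blast
  next
    fix ys assume "ys \<in> (\<Union>x\<in>UNIV. (Cons x) ` A x)"
    then obtain x where "ys \<in> (Cons x) ` A x" by (rule UN_E)
    then obtain zs where xz: "ys = x # zs" and zs: "zs \<in> A x" by (rule imageE)
    have l: "length zs = a+b-1" and s: "Sing a b (fps_of (x#zs))" using zs unfolding A_def by simp_all
    have "length ys = a+b" using l xz assms by simp
    thus "ys \<in> {ys::'a list. length ys = a+b \<and> Sing a b (fps_of ys)}"
      using s xz by simp
  qed
  have "card (\<Union>x\<in>UNIV. (Cons x) ` A x) = (\<Sum>x\<in>UNIV. card ((Cons x) ` A x))"
  proof (rule card_UN_disjoint)
    show "finite (UNIV::'a set)" by simp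
    show "\<forall>i\<in>UNIV. finite ((Cons i) ` A i)"
      unfolding A_def by (intro ballI, rule finite_imageI, rule finite_len)
    show "\<forall>i\<in>UNIV. \<forall>j\<in>UNIV. i \<noteq> j \<longrightarrow> (Cons i) ` A i \<inter> (Cons j) ` A j = {}"
      by blast
  qed
  also have "\<dots> = (\<Sum>x\<in>(UNIV::'a set). C x a b)"
  proof (intro sum.cong refl)
    fix x :: 'a
    have "card ((Cons x) ` A x) = card (A x)" by (rule card_image) simp
    thus "card ((Cons x) ` A x) = C x a b" by (simp add: A_def C_def)
  qed
  also have "\<dots> = C (0::'a) a b + (\<Sum>x\<in>UNIV - {0::'a}. C x a b)"
    by (rule sum.remove) auto
  also have "(\<Sum>x\<in>UNIV - {0::'a}. C x a b) = (\<Sum>x\<in>UNIV - {0::'a}. C (1::'a) a b)"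
  proof (intro sum.cong refl)
    fix x assume "x \<in> UNIV - {0::'a}"
    thus "C x a b = C (1::'a) a b" by (intro C_scale) simp
  qed
  also have "\<dots> = (card (UNIV::'a set) - 1) * C (1::'a) a b"
    by (simp add: card_Diff_singleton)
  finally show ?thesis unfolding G_def S .
qed

lemma C0_left: "1 \<le> b \<Longrightarrow> C (0::'a::{field,finite}) 0 b = card (UNIV::'a set) ^ (b-1)"
  unfolding C_def using Sing_zero_left[of b, where 'a='a] card_lists_univ[where 'a='a, of "b-1"]
  by (simp add: fps_of_def)

lemma C1_left: "1 \<le> b \<Longrightarrow> C (1::'a::{field,finite}) 0 b = 0"
  unfolding C_def using Sing_zero_left[of b, where 'a='a] by (simp add: fps_of_def)

lemma aux_q: "(q::nat) \<ge> 1 \<Longrightarrow> x + (q - 1) * x = q * x"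
  by (cases q) auto

lemma G_main_n: "\<forall>a b. a + b = n \<longrightarrow> 1 \<le> b \<longrightarrow> G a b TYPE('a::{field,finite}) = card (UNIV::'a set) ^ (a+b-1)"
proof (induction n rule: less_induct)
  case (less n)
  let ?q = "card (UNIV::'a set)"
  have q: "?q \<ge> 1" using finite_UNIV_card_ge_0[where 'a='a] by simp
  show ?case
  proof (intro allI impI)
  fix a b assume n: "a + b = n" and b1: "1 \<le> b"
  show "G a b TYPE('a) = ?q ^ (a+b-1)"
  proof (cases "a = 0")
    case True
    thus ?thesis using G_sum[of 0 b, where 'a='a] b1 C0_left[of b, where 'a='a] C1_left[of b, where 'a='a]
      by simp
  next
    case False
    hence a1: "1 \<le> a" by simp
    have IH1: "G (a-1) b TYPE('a) = ?q ^ (a+b-2)"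
    proof -
      have "a - 1 + b < n" using a1 n by simp
      hence "G (a-1) b TYPE('a) = ?q ^ (a-1+b-1)" using less.IH[rule_format, of "a-1+b" "a-1" b] b1 by simp
      moreover have "a-1+b-1 = a+b-2" using a1 by simp
      ultimately show ?thesis by simp
    qed
    have c0: "C (0::'a) a b = ?q ^ (a+b-2)" using C_shift[of a b "0::'a"] a1 IH1 by simp
    have c1: "C (1::'a) a b = ?q ^ (a+b-2)"
    proof (cases "b \<le> a")
      case True thus ?thesis using C_shift[of a b "1::'a"] a1 IH1 by simp
    next
      case False
      have "C (1::'a) a b = C (1::'a) b a" using C_dual[of a b, where 'a='a] a1 by simp
      also have "\<dots> = G (b-1) a TYPE('a)" using C_shift[of b a "1::'a"] False by simp
      also have "\<dots> = ?q ^ (b-1+a-1)"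
      proof -
        have "b - 1 + a < n" using False n by simp
        thus ?thesis using less.IH[rule_format, of "b-1+a" "b-1" a] a1 by simp
      qed
      also have "b-1+a-1 = a+b-2" using a1 False by simp
      finally show ?thesis .
    qed
    have "G a b TYPE('a) = ?q^(a+b-2) + (?q - 1) * ?q^(a+b-2)"
      using G_sum[of a b, where 'a='a] a1 c0 c1 by simp
    also have "\<dots> = ?q * ?q^(a+b-2)" by (rule aux_q[OF q])
    also have "\<dots> = ?q^(Suc (a+b-2))" by simp
    also have "Suc (a+b-2) = a+b-1" using a1 b1 by simp
    finally show ?thesis .
  qed
  qed
qed

lemma G_main: "1 \<le> b \<Longrightarrow> G a b TYPE('a::{field,finite}) = card (UNIV::'a set) ^ (a+b-1)"
  using G_main_n[where 'a='a, rule_format, of a b] by simp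

lemma conv_sum:
  fixes f Q :: "'a::field fps"
  assumes "\<forall>k\<ge>v. Q$k = 0"
  shows "(f*Q)$N = (\<Sum>j<v. (if v - Suc j \<le> N then f$(N-(v - Suc j)) else 0) * Q$(v - Suc j))"
proof -
  have "(f*Q)$N = (Q*f)$N" by (simp add: mult.commute)
  also have "\<dots> = (\<Sum>k=0..N. Q$k * f$(N-k))" by (rule fps_mult_nth)
  also have "\<dots> = (\<Sum>k\<in>{0..N} \<inter> {..<v}. Q$k * f$(N-k))"
  proof (rule sum.mono_neutral_right)
    have a: "\<And>k. Q$k \<noteq> 0 \<Longrightarrow> k < v" using assms leI by blast
    show "\<forall>i\<in>{0..N} - {0..N} \<inter> {..<v}. Q $ i * f $ (N - i) = 0" using a by auto
  qed auto
  also have "{0..N} \<inter> {..<v} = {k\<in>{..<v}. k \<le> N}" by auto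
  also have "(\<Sum>k\<in>{k\<in>{..<v}. k \<le> N}. Q$k * f$(N-k)) = (\<Sum>k<v. if k \<le> N then Q$k * f$(N-k) else 0)"
    by (rule sum.inter_filter) simp
  also have "\<dots> = (\<Sum>k<v. (if k \<le> N then f$(N-k) else 0) * Q$k)"
    by (intro sum.cong refl) (simp add: mult.commute)
  also have "\<dots> = (\<Sum>j<v. (if v - Suc j \<le> N then f$(N-(v - Suc j)) else 0) * Q$(v - Suc j))"
    by (rule sum.nat_diff_reindex[symmetric])
  finally show ?thesis .
qed

definition Qc :: "nat \<Rightarrow> 'a::field vec \<Rightarrow> 'a fps" where
  "Qc v c = Abs_fps (\<lambda>k. if k < v then vec_index c (v-1-k) else 0)"

lemma coef_eq:
  assumes "length ys = u+v-1" "i < v" "j < v"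
  shows "(if v - Suc j \<le> u+v-1-i then fps_of (1#ys) $ (u+v-1-i-(v - Suc j)) else 0) = yent ys (int u - int i + int j)"
proof (cases "i \<le> u + j")
  case True
  have le: "v - Suc j \<le> u+v-1-i" using True assms by linarith
  define m where "m = u + j - i"
  have m: "u+v-1-i-(v - Suc j) = m" using True assms by (simp add: m_def)
  have mi: "int u - int i + int j = int m" using True by (simp add: m_def)
  have ml: "m < Suc (length ys)" using assms by (simp add: m_def)
  show ?thesis
    using le ml unfolding m mi by (simp add: yent_def fps_of_def nth_Cons split: nat.splits)
next
  case False
  have "\<not> v - Suc j \<le> u+v-1-i" using False assms by linarith
  moreover have "int u - int i + int j < 0" using False by simp
  ultimately show ?thesis by (simp add: yent_def)
qed

lemma J_mult:
  assumes "length ys = u+v-1" "i < v" "c \<in> carrier_vec v"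
  shows "vec_index (Jmat u v ys *\<^sub>v c) i = (fps_of (1#ys) * Qc v c) $ (u+v-1-i)"
proof -
  have dc: "dim_vec c = v" using assms(3) by simp
  have "vec_index (Jmat u v ys *\<^sub>v c) i = (\<Sum>j\<in>{0..<v}. yent ys (int u - int i + int j) * vec_index c j)"
    using assms(2) dc by (simp add: Jmat_def scalar_prod_def)
  also have "\<dots> = (\<Sum>j<v. (if v - Suc j \<le> u+v-1-i then fps_of (1#ys) $ (u+v-1-i-(v - Suc j)) else 0) * Qc v c $(v - Suc j))"
  proof (intro sum.cong)
    show "{0..<v} = {..<v}" by auto
    fix j assume j: "j \<in> {..<v}"
    have "Qc v c $ (v - Suc j) = vec_index c j" using j by (simp add: Qc_def)
    thus "yent ys (int u - int i + int j) * vec_index c j =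
      (if v - Suc j \<le> u+v-1-i then fps_of (1#ys) $ (u+v-1-i-(v - Suc j)) else 0) * Qc v c $(v - Suc j)"
      using coef_eq[OF assms(1,2), of j] j by simp
  qed
  also have "\<dots> = (fps_of (1#ys) * Qc v c) $ (u+v-1-i)"
    by (rule conv_sum[symmetric]) (simp add: Qc_def)
  finally show ?thesis .
qed


lemma det_Sing:
  fixes ys :: "'a::field list"
  assumes len: "length ys = u+v-1" and u1: "1 \<le> u" and v1: "1 \<le> v"
  shows "(det (Jmat u v ys) = 0) = Sing u v (fps_of (1#ys))"
proof -
  have car: "Jmat u v ys \<in> carrier_mat v v" by (simp add: Jmat_def)
  let ?f = "fps_of (1#ys)"
  show ?thesis unfolding det_0_iff_vec_prod_zero_field[OF car]
  proof
    assume "\<exists>c. c \<in> carrier_vec v \<and> c \<noteq> 0\<^sub>v v \<and> Jmat u v ys *\<^sub>v c = 0\<^sub>v v"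
    then obtain c where c: "c \<in> carrier_vec v" "c \<noteq> 0\<^sub>v v" "Jmat u v ys *\<^sub>v c = 0\<^sub>v v" by blast
    have dc: "dim_vec c = v" using c(1) by simp
    obtain j where j: "j < v" "vec_index c j \<noteq> 0"
      using c(2) dc by (metis eq_vecI index_zero_vec)
    have "Qc v c $ (v - Suc j) = vec_index c j" using j by (simp add: Qc_def)
    hence "Qc v c \<noteq> 0" using j by (metis fps_zero_nth)
    moreover have "\<forall>k\<ge>v. Qc v c $ k = 0" by (simp add: Qc_def)
    moreover have "\<forall>k. u \<le> k \<and> k < u+v \<longrightarrow> (?f * Qc v c) $ k = 0"
    proof (intro allI impI)
      fix k assume k: "u \<le> k \<and> k < u+v"
      define i where "i = u+v-1-k"
      have i: "i < v" "u+v-1-i = k" using k by (auto simp: i_def)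
      have "vec_index (Jmat u v ys *\<^sub>v c) i = 0" using c(3) i by simp
      thus "(?f * Qc v c) $ k = 0" using J_mult[OF len i(1) c(1)] i by simp
    qed
    ultimately show "Sing u v ?f" unfolding Sing_def by blast
  next
    assume "Sing u v ?f"
    then obtain Q where Q: "Q \<noteq> 0" "\<forall>k\<ge>v. Q$k = 0" "\<forall>k. u \<le> k \<and> k < u+v \<longrightarrow> (?f*Q)$k = 0"
      unfolding Sing_def by blast
    define c where "c = vec v (\<lambda>j. Q $ (v - Suc j))"
    have c1: "c \<in> carrier_vec v" by (simp add: c_def)
    have QQ: "Qc v c = Q"
    proof (rule fps_ext)
      fix k show "Qc v c $ k = Q $ k"
        using Q(2) by (cases "k < v") (auto simp: Qc_def c_def Suc_diff_Suc)
    qed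
    have "c \<noteq> 0\<^sub>v v"
    proof
      assume "c = 0\<^sub>v v"
      hence "Qc v c = 0" by (rule_tac fps_ext) (simp add: Qc_def)
      thus False using QQ Q(1) by simp
    qed
    moreover have "Jmat u v ys *\<^sub>v c = 0\<^sub>v v"
    proof (rule eq_vecI)
      show "dim_vec (Jmat u v ys *\<^sub>v c) = dim_vec (0\<^sub>v v)" by (simp add: Jmat_def)
      fix i assume "i < dim_vec (0\<^sub>v v)"
      hence i: "i < v" by simp
      have "vec_index (Jmat u v ys *\<^sub>v c) i = (?f * Q) $ (u+v-1-i)"
        using J_mult[OF len i c1] QQ by simp
      also have "\<dots> = 0" using Q(3) i v1 by simp
      finally show "vec_index (Jmat u v ys *\<^sub>v c) i = vec_index (0\<^sub>v v) i" using i by simp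
    qed
    ultimately show "\<exists>c. c \<in> carrier_vec v \<and> c \<noteq> 0\<^sub>v v \<and> Jmat u v ys *\<^sub>v c = 0\<^sub>v v"
      using c1 by blast
  qed
qed

theorem corollary5:
  assumes "u \<ge> 1" and "v \<ge> 1"
  shows "card {ys :: ('a::{field,finite}) list. length ys = u + v - 1 \<and> det (Jmat u v ys) = 0}
           = card (UNIV :: 'a set) ^ (u + v - 2)"
proof -
  have "{ys :: 'a list. length ys = u + v - 1 \<and> det (Jmat u v ys) = 0}
      = {ys :: 'a list. length ys = u + v - 1 \<and> Sing u v (fps_of (1#ys))}"
    using det_Sing assms by blast
  hence e: "card {ys :: 'a list. length ys = u + v - 1 \<and> det (Jmat u v ys) = 0} = C (1::'a) u v"
    by (simp add: C_def)
  show ?thesis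
  proof (cases "v \<le> u")
    case True
    have "C (1::'a) u v = G (u-1) v TYPE('a)" using C_shift[of u v "1::'a"] True assms by simp
    also have "\<dots> = card (UNIV :: 'a set) ^ (u-1+v-1)" using G_main[of v "u-1", where 'a='a] assms by simp
    also have "u-1+v-1 = u+v-2" using assms by simp
    finally show ?thesis using e by simp
  next
    case False
    have "C (1::'a) u v = C (1::'a) v u" using C_dual[of u v, where 'a='a] assms by simp
    also have "\<dots> = G (v-1) u TYPE('a)" using C_shift[of v u "1::'a"] False assms by simp
    also have "\<dots> = card (UNIV :: 'a set) ^ (v-1+u-1)" using G_main[of u "v-1", where 'a='a] assms by simp
    also have "v-1+u-1 = u+v-2" using assms by simp
    finally show ?thesis using e by simp
  qed
qed

end
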